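(* Let $(T,\lambda)$ be an increasing tree. Then $(T,\lambda)$ is left increasing if and only if, for any branchings $b$ and $b'$ of $T$ such that $b$ is to the left of $b'$ and the vertices of $b$ and $b'$ do not lie on a common path connecting a leaf of $T$ with the root of $T$, we have $\lambda(b)<\lambda(b')$.
   Context: A (planar rooted) tree is a finite planar rooted tree in which each vertex has one outgoing edge and at least two incoming edges (ordered left to right), incoming edges being leaves or coming from other vertices; $\varepsilon$ is the trivial tree with no vertex. For $m\ge1$, $\bigvee(T_0,\ldots,T_m)$ joins the roots of $T_0,\ldots,T_m$ to a new vertex with a new root; every non-trivial tree is uniquely such a wedge. A vertex with $j+1$ incoming edges carries $j$ branchings (pairs of consecutive incoming edges); the level $\lambda(b)$ of a branching is the level of its vertex. "To the left" refers to the left-to-right order $\preceq$ on branchings defined recursively: for $T=\bigvee(T_0,\ldots,T_m)$ with root branchings $b_1,\ldots,b_m$ ($b_i$ between $T_{i-1}$ and $T_i$), $b_i\prec b\prec b_{i+1}$ for $b$ in $T_i$, branchings of $T_i$ ordered recursively. A level function is a surjection $\lambda$ from vertices onto $[k]$ strictly increasing along each leaf-to-root path; an increasing tree is $(T,\lambda)$. $\mathsf{Inc}$: $\mathsf{Inc}(\varepsilon)=\varepsilon$; if $T=\bigvee(T_0,\ldots,T_m)$ and $\mathsf{Inc}(T_i)=(T_i,\lambda_i)$ with $k_i$ levels, then $\mathsf{Inc}(T)=(T,\lambda)$ with $\lambda(v)=k_0+\cdots+k_{i-1}+\lambda_i(v)$ for vertices $v$ of $T_i$ and root vertex level $k_0+\cdots+k_m+1$.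 An increasing tree is left increasing if it equals $\mathsf{Inc}(T)$ for some tree $T$. *)

theory Defs
  imports Main
begin

text \<open>Planar rooted trees. Eps is the trivial tree (no vertex); a leaf incoming
edge is represented by an Eps subtree. Node [T0,...,Tm] is the wedge
of T0,...,Tm (well-formedness requires m >= 1).\<close>
datatype tree = Eps | Node "tree list"

fun wf_tree :: "tree \<Rightarrow> bool" where
  "wf_tree Eps = True"
| "wf_tree (Node ts) = (2 \<le> length ts \<and> (\<forall>t\<in>set ts. wf_tree t))"

text \<open>Vertices are addressed by paths from the root: [] is the root vertex,
i # p is the vertex p inside the i-th subtree (0-based).\<close>
fun subtree :: "tree \<Rightarrow> nat list \<Rightarrow> tree option" where
  "subtree t [] = Some t"
| "subtree Eps (i # p) = None"
| "subtree (Node ts) (i # p) = (if i < length ts then subtree (ts ! i) p else None)"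

definition vertices :: "tree \<Rightarrow> nat list set" where
  "vertices T = {v. \<exists>ts. subtree T v = Some (Node ts)}"

text \<open>Branchings: (v, j) with 1 \<le> j \<le> m is the branching of vertex v between its
(j-1)-th and j-th incoming edges. The list below enumerates all branchings
in the left-to-right order defined in the paper.\<close>
fun branchings :: "tree \<Rightarrow> (nat list \<times> nat) list"
and branchings_from :: "nat \<Rightarrow> tree list \<Rightarrow> (nat list \<times> nat) list" where
  "branchings Eps = []"
| "branchings (Node ts) = branchings_from 0 ts"
| "branchings_from i [] = []"
| "branchings_from i (t # ts) =
     (if i = 0 then [] else [([], i)])
     @ map (\<lambda>(v, j). (i # v, j)) (branchings t)
     @ branchings_from (Suc i) ts"

definition left_of :: "tree \<Rightarrow> (nat list \<times> nat) \<Rightarrow> (nat list \<times> nat) \<Rightarrow> bool" where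
  "left_of T b b' = (\<exists>i j. i < j \<and> j < length (branchings T)
                         \<and> branchings T ! i = b \<and> branchings T ! j = b')"

text \<open>Two vertices lie on a common leaf-to-root path iff one is an ancestor
(or equal) of the other.\<close>
definition on_common_path :: "nat list \<Rightarrow> nat list \<Rightarrow> bool" where
  "on_common_path v w = ((\<exists>u. w = v @ u) \<or> (\<exists>u. v = w @ u))"

definition increasing :: "tree \<Rightarrow> (nat list \<Rightarrow> nat) \<Rightarrow> bool" where
  "increasing T lam =
     ((\<exists>k. lam ` vertices T = {1..k}) \<and>
      (\<forall>v i. v \<in> vertices T \<and> v @ [i] \<in> vertices T \<longrightarrow> lam (v @ [i]) < lam v))"

fun nlev :: "tree \<Rightarrow> nat" where
  "nlev Eps = 0"
| "nlev (Node ts) = sum_list (map nlev ts) + 1"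

fun inc :: "tree \<Rightarrow> nat list \<Rightarrow> nat" where
  "inc Eps p = 0"
| "inc (Node ts) [] = nlev (Node ts)"
| "inc (Node ts) (i # p) = sum_list (map nlev (take i ts)) + inc (ts ! i) p"

definition left_increasing :: "tree \<Rightarrow> (nat list \<Rightarrow> nat) \<Rightarrow> bool" where
  "left_increasing T lam = (\<forall>v \<in> vertices T. lam v = inc T v)"

end

theory Submission
  imports Defs
begin

lemma vert_Eps[simp]: "v \<notin> vertices Eps"
  by (cases v) (auto simp: vertices_def)

lemma vert_Nil[simp]: "[] \<in> vertices (Node ts)"
  by (auto simp: vertices_def)

lemma vert_Cons[simp]: "(i # r) \<in> vertices (Node ts) \<longleftrightarrow> i < length ts \<and> r \<in> vertices (ts ! i)"
  by (auto simp: vertices_def)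

lemma vert_Nil_iff: "[] \<in> vertices T \<longleftrightarrow> T \<noteq> Eps"
  by (cases T) auto

lemma vert_prefix: "v @ u \<in> vertices T \<Longrightarrow> v \<in> vertices T"
proof (induction v arbitrary: T)
  case Nil
  then show ?case by (cases T; cases u) auto
next
  case (Cons a v)
  then show ?case by (cases T) auto
qed

fun lexless :: "nat list \<Rightarrow> nat list \<Rightarrow> bool" where
  "lexless (a # v) (b # w) = (a < b \<or> (a = b \<and> lexless v w))"
| "lexless _ _ = False"

lemma lex_tri: "(\<exists>u. w = v @ u) \<or> (\<exists>u. v = w @ u) \<or> lexless v w \<or> lexless w v"
proof (induction v arbitrary: w)
  case Nil then show ?case by auto
next
  case (Cons a v)
  show ?case
  proof (cases w)
    case Nil then show ?thesis by auto
  next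
    case (Cons b w')
    then show ?thesis using Cons.IH[of w'] by (cases "a = b") auto
  qed
qed

lemma lex_not_prefix: "\<not> lexless v (v @ u)" "\<not> lexless (v @ u) v"
  by (induction v) auto

lemma lex_not_common: "lexless v w \<Longrightarrow> \<not> on_common_path v w"
  unfolding on_common_path_def using lex_not_prefix by blast

lemma set_bf: "b \<in> set (branchings_from i ts) \<longleftrightarrow>
   (\<exists>k<length ts. (b = ([], i+k) \<and> i+k \<noteq> 0) \<or>
      (\<exists>v j. b = ((i+k) # v, j) \<and> (v, j) \<in> set (branchings (ts ! k))))"
proof (induction ts arbitrary: i)
  case Nil then show ?case by simp
next
  case (Cons t ts)
  show ?case
    unfolding Ex_less_Suc2 length_Cons
    by (auto simp: Cons.IH)
qed


lemma br_fst_vert: "b \<in> set (branchings T) \<Longrightarrow> fst b \<in> vertices T"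
proof (induction T arbitrary: b)
  case Eps then show ?case by simp
next
  case (Node ts)
  from Node.prems obtain k where k: "k < length ts" and
    "(b = ([], k) \<and> k \<noteq> 0) \<or> (\<exists>v j. b = (k # v, j) \<and> (v, j) \<in> set (branchings (ts ! k)))"
    by (auto simp: set_bf)
  then show ?case using Node.IH[of "ts ! k"] by auto
qed

lemma vert_br: "wf_tree T \<Longrightarrow> v \<in> vertices T \<Longrightarrow> (v, 1) \<in> set (branchings T)"
proof (induction T arbitrary: v)
  case Eps then show ?case by simp
next
  case (Node ts)
  show ?case
  proof (cases v)
    case Nil
    then show ?thesis using Node.prems by (auto simp: set_bf intro!: exI[of _ 1])
  next
    case (Cons a r)
    then have "a < length ts" "r \<in> vertices (ts ! a)" using Node.prems by auto
    moreover have "(r, 1) \<in> set (branchings (ts ! a))"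
      using Node.IH[of "ts ! a" r] Node.prems calculation by auto
    ultimately show ?thesis using Cons by (auto simp: set_bf)
  qed
qed

lemma br_distinct: "distinct (branchings T)" "distinct (branchings_from i ts)"
proof (induction T and i ts rule: branchings_branchings_from.induct)
  case (4 i t ts)
  have inj: "inj_on (\<lambda>(v, j). (i # v, j)) X" for X :: "(nat list \<times> nat) set"
    by (auto simp: inj_on_def)
  show ?case
    using 4 by (auto simp: distinct_map inj set_bf)
qed auto


definition before :: "'a list \<Rightarrow> 'a \<Rightarrow> 'a \<Rightarrow> bool" where
  "before xs a b = (\<exists>i j. i < j \<and> j < length xs \<and> xs ! i = a \<and> xs ! j = b)"

lemma before_app1: "before xs a b \<Longrightarrow> before (xs @ ys) a b"
  unfolding before_def by (metis less_trans nth_append trans_less_add1 length_append)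

lemma before_app2: "before ys a b \<Longrightarrow> before (xs @ ys) a b"
  unfolding before_def
  apply clarify
  subgoal for i j by (rule exI[of _ "length xs + i"], rule exI[of _ "length xs + j"]) (auto simp: nth_append)
  done

lemma before_cross: "a \<in> set xs \<Longrightarrow> b \<in> set ys \<Longrightarrow> before (xs @ ys) a b"
  unfolding before_def in_set_conv_nth
  apply clarify
  subgoal for i j by (rule exI[of _ i], rule exI[of _ "length xs + j"]) (auto simp: nth_append)
  done

lemma before_map: "before xs a b \<Longrightarrow> before (map f xs) (f a) (f b)"
  unfolding before_def by force

lemma before_distinct: "distinct xs \<Longrightarrow> before xs a b \<Longrightarrow> before xs b a \<Longrightarrow> False"
  unfolding before_def by (metis distinct_conv_nth less_trans not_less_iff_gr_or_eq)

lemma br_lex: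
  "\<forall>b b'. b \<in> set (branchings T) \<and> b' \<in> set (branchings T) \<and> lexless (fst b) (fst b')
     \<longrightarrow> before (branchings T) b b'"
  "\<forall>b b'. b \<in> set (branchings_from i ts) \<and> b' \<in> set (branchings_from i ts) \<and> lexless (fst b) (fst b')
     \<longrightarrow> before (branchings_from i ts) b b'"
proof (induction T and i ts rule: branchings_branchings_from.induct)
  case (4 i t ts)
  let ?R = "(if i = 0 then [] else [([], i)])"
  let ?f = "\<lambda>(v, j). (i # v, j)"
  let ?M = "map ?f (branchings t)"
  let ?B = "branchings_from (Suc i) ts"
  show ?case
  proof (intro allI impI)
    fix b b' assume H: "b \<in> set (branchings_from i (t # ts)) \<and> b' \<in> set (branchings_from i (t # ts)) \<and> lexless (fst b) (fst b')"
    have eq: "branchings_from i (t # ts) = ?R @ ?M @ ?B" by simp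
    have nR: "b \<notin> set ?R" "b' \<notin> set ?R" using H by (auto split: if_splits)
    have "(b \<in> set ?M \<or> b \<in> set ?B) \<and> (b' \<in> set ?M \<or> b' \<in> set ?B)"
      using H nR unfolding eq by auto
    then have "before (?M @ ?B) b b'"
    proof (elim conjE disjE)
      assume a: "b \<in> set ?M" "b' \<in> set ?M"
      then obtain v j v' j' where b: "b = (i # v, j)" "(v, j) \<in> set (branchings t)"
        and b': "b' = (i # v', j')" "(v', j') \<in> set (branchings t)" by auto
      have "before (branchings t) (v, j) (v', j')" using 4(1) b b' H by auto
      then have "before ?M (?f (v, j)) (?f (v', j'))" by (rule before_map)
      then show ?thesis using b b' by (auto intro: before_app1)
    next
      assume "b \<in> set ?M" "b' \<in> set ?B" then show ?thesis by (rule before_cross)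
    next
      assume a: "b \<in> set ?B" "b' \<in> set ?M"
      then show ?thesis using H by (auto simp: set_bf)
    next
      assume "b \<in> set ?B" "b' \<in> set ?B" then show ?thesis using 4(2) H by (metis before_app2)
    qed
    then show "before (branchings_from i (t # ts)) b b'" unfolding eq by (rule before_app2)
  qed
qed auto


abbreviation S :: "tree list \<Rightarrow> nat \<Rightarrow> nat" where
  "S ts i \<equiv> sum_list (map nlev (take i ts))"

lemma S_Suc: "i < length ts \<Longrightarrow> S ts (Suc i) = S ts i + nlev (ts ! i)"
  by (simp add: take_Suc_conv_app_nth)

lemma S_mono: "i \<le> j \<Longrightarrow> S ts i \<le> S ts j"
proof -
  assume "i \<le> j"
  then have "take j ts = take i ts @ take (j - i) (drop i ts)"
    using take_add[of i "j - i" ts] by simp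
  then show ?thesis by simp
qed

lemma S_le: "S ts i \<le> sum_list (map nlev ts)"
  by (metis append_take_drop_id map_append sum_list_append le_add1)

lemma inc_bounds: "v \<in> vertices T \<Longrightarrow> 1 \<le> inc T v \<and> inc T v \<le> nlev T"
proof (induction T arbitrary: v)
  case Eps then show ?case by simp
next
  case (Node ts)
  show ?case
  proof (cases v)
    case Nil then show ?thesis by simp
  next
    case (Cons a r)
    then have a: "a < length ts" "r \<in> vertices (ts ! a)" using Node.prems by auto
    then have "1 \<le> inc (ts ! a) r \<and> inc (ts ! a) r \<le> nlev (ts ! a)" using Node.IH by auto
    moreover have "S ts (Suc a) \<le> sum_list (map nlev ts)" by (rule S_le)
    ultimately show ?thesis using Cons a S_Suc[OF a(1)] by auto
  qed
qed

lemma inc_desc: "v @ u \<in> vertices T \<Longrightarrow> u \<noteq> [] \<Longrightarrow> inc T (v @ u) < inc T v"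
proof (induction v arbitrary: T)
  case Nil
  then obtain ts where T: "T = Node ts" by (cases T) auto
  obtain i r where u: "u = i # r" using Nil by (cases u) auto
  have a: "i < length ts" "r \<in> vertices (ts ! i)" using Nil T u by auto
  have "inc (ts ! i) r \<le> nlev (ts ! i)" using inc_bounds[OF a(2)] by auto
  moreover have "S ts (Suc i) \<le> sum_list (map nlev ts)" by (rule S_le)
  ultimately show ?case using T u S_Suc[OF a(1)] by auto
next
  case (Cons a v)
  then obtain ts where T: "T = Node ts" by (cases T) auto
  then show ?case using Cons by auto
qed

lemma inc_lex: "v \<in> vertices T \<Longrightarrow> w \<in> vertices T \<Longrightarrow> lexless v w \<Longrightarrow> inc T v < inc T w"
proof (induction v arbitrary: w T)
  case Nil then show ?case by simp
next
  case (Cons a v)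
  then obtain b w' where w: "w = b # w'" by (cases w) auto
  obtain ts where T: "T = Node ts" using Cons by (cases T) auto
  have va: "a < length ts" "v \<in> vertices (ts ! a)" "b < length ts" "w' \<in> vertices (ts ! b)"
    using Cons w T by auto
  show ?case
  proof (cases "a < b")
    case True
    have "inc (ts ! a) v \<le> nlev (ts ! a)" using inc_bounds[OF va(2)] by auto
    moreover have "1 \<le> inc (ts ! b) w'" using inc_bounds[OF va(4)] by auto
    moreover have "S ts (Suc a) \<le> S ts b" using True by (intro S_mono) auto
    ultimately show ?thesis using T w S_Suc[OF va(1)] by auto
  next
    case False
    then have "a = b" "lexless v w'" using Cons w by auto
    then show ?thesis using Cons.IH[of "ts ! a" w'] va T w by auto
  qed
qed

lemma card_vert: "finite (vertices T) \<and> card (vertices T) = nlev T"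
proof (induction T)
  case Eps
  have "vertices Eps = {}" by auto
  then show ?case by simp
next
  case (Node ts)
  have eq: "vertices (Node ts) = insert [] (\<Union>i<length ts. (#) i ` vertices (ts ! i))"
  proof (rule set_eqI)
    fix v show "v \<in> vertices (Node ts) \<longleftrightarrow> v \<in> insert [] (\<Union>i<length ts. (#) i ` vertices (ts ! i))"
      by (cases v) auto
  qed
  have fin: "finite ((#) i ` vertices (ts ! i))" if "i < length ts" for i
    using Node.IH[of "ts ! i"] that by auto
  have cardi: "card ((#) i ` vertices (ts ! i)) = nlev (ts ! i)" if "i < length ts" for i
    using Node.IH[of "ts ! i"] that by (subst card_image) (auto simp: inj_on_def)
  have "card (\<Union>i<length ts. (#) i ` vertices (ts ! i)) = (\<Sum>i<length ts. card ((#) i ` vertices (ts ! i)))"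
    by (rule card_UN_disjoint) (auto simp: fin)
  also have "\<dots> = (\<Sum>i<length ts. nlev (ts ! i))" by (rule sum.cong) (auto simp: cardi)
  also have "\<dots> = sum_list (map nlev ts)" by (simp add: sum_list_sum_nth atLeast0LessThan)
  moreover have "finite (\<Union>i<length ts. (#) i ` vertices (ts ! i))" using fin by auto
  moreover have "[] \<notin> (\<Union>i<length ts. (#) i ` vertices (ts ! i))" by auto
  ultimately show ?case unfolding eq by simp
qed


definition prec :: "nat list \<Rightarrow> nat list \<Rightarrow> bool" where
  "prec w v = ((\<exists>u. u \<noteq> [] \<and> w = v @ u) \<or> lexless w v)"

lemma prec_tri: "w \<noteq> v \<Longrightarrow> prec w v \<or> prec v w"
  unfolding prec_def using lex_tri[of w v] by force

lemma rank:
  fixes f :: "nat list \<Rightarrow> nat"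
  assumes mono: "\<And>w v. w \<in> V \<Longrightarrow> v \<in> V \<Longrightarrow> prec w v \<Longrightarrow> f w < f v"
    and img: "f ` V = {1..k}" and v: "v \<in> V"
  shows "f v = card {w \<in> V. w = v \<or> prec w v}"
proof -
  have inj: "inj_on f V"
    by (rule inj_onI) (metis mono prec_tri less_irrefl less_asym)
  have eq: "{w \<in> V. w = v \<or> prec w v} = {w \<in> V. f w \<le> f v}"
  proof (intro Collect_cong conj_cong refl)
    fix w assume w: "w \<in> V"
    show "(w = v \<or> prec w v) = (f w \<le> f v)"
      using mono[OF w v] mono[OF v w] prec_tri[of w v] by (metis less_imp_le not_le)
  qed
  have "f ` {w \<in> V. f w \<le> f v} = {1..f v}"
  proof
    show "f ` {w \<in> V. f w \<le> f v} \<subseteq> {1..f v}" using img by auto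
    show "{1..f v} \<subseteq> f ` {w \<in> V. f w \<le> f v}"
    proof
      fix x assume x: "x \<in> {1..f v}"
      have "f v \<le> k" using img v by auto
      then have "x \<in> f ` V" using x img by auto
      then show "x \<in> f ` {w \<in> V. f w \<le> f v}" using x by auto
    qed
  qed
  then have "card {w \<in> V. f w \<le> f v} = f v"
    using card_image[OF inj_on_subset[OF inj, of "{w \<in> V. f w \<le> f v}"]] by auto
  then show ?thesis using eq by simp
qed

lemma lam_desc:
  assumes inc: "increasing T lam"
  shows "v @ u \<in> vertices T \<Longrightarrow> u \<noteq> [] \<Longrightarrow> lam (v @ u) < lam v"
proof (induction u rule: rev_induct)
  case Nil then show ?case by simp
next
  case (snoc x u)
  have vu: "v @ u \<in> vertices T" using snoc.prems vert_prefix[of "v @ u" "[x]"] by auto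
  have step: "lam (v @ u @ [x]) < lam (v @ u)"
    using inc snoc.prems vu unfolding increasing_def by (metis append_assoc)
  show ?case
  proof (cases "u = []")
    case True then show ?thesis using step by simp
  next
    case False then show ?thesis using snoc.IH vu step by auto
  qed
qed


lemma inj_prec:
  fixes f :: "nat list \<Rightarrow> nat"
  assumes mono: "\<And>w v. w \<in> V \<Longrightarrow> v \<in> V \<Longrightarrow> prec w v \<Longrightarrow> f w < f v"
  shows "inj_on f V"
  by (rule inj_onI) (metis mono prec_tri less_irrefl less_asym)

lemma inc_mono: "w \<in> vertices T \<Longrightarrow> v \<in> vertices T \<Longrightarrow> prec w v \<Longrightarrow> inc T w < inc T v"
  unfolding prec_def using inc_desc inc_lex by blast

lemma inc_img: "inc T ` vertices T = {1..nlev T}"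
proof -
  have inj: "inj_on (inc T) (vertices T)" using inj_prec[of "vertices T" "inc T"] inc_mono by blast
  have sub: "inc T ` vertices T \<subseteq> {1..nlev T}" using inc_bounds by auto
  have "card (inc T ` vertices T) = card {1..nlev T}"
    using card_image[OF inj] card_vert[of T] by simp
  then show ?thesis using card_subset_eq[OF _ sub] by simp
qed

lemma left_of_before: "left_of T b b' = before (branchings T) b b'"
  unfolding left_of_def before_def by blast

theorem lemma4p6:
  fixes T :: tree and lam :: "nat list \<Rightarrow> nat"
  assumes "wf_tree T" and "increasing T lam"
  shows "left_increasing T lam \<longleftrightarrow>
    (\<forall>b b'. b \<in> set (branchings T) \<and> b' \<in> set (branchings T) \<and> left_of T b b'
       \<and> \<not> on_common_path (fst b) (fst b') \<longrightarrow> lam (fst b) < lam (fst b'))"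
proof
  assume L: "left_increasing T lam"
  show "\<forall>b b'. b \<in> set (branchings T) \<and> b' \<in> set (branchings T) \<and> left_of T b b'
       \<and> \<not> on_common_path (fst b) (fst b') \<longrightarrow> lam (fst b) < lam (fst b')"
  proof (intro allI impI, elim conjE)
    fix b b' assume b: "b \<in> set (branchings T)" and b': "b' \<in> set (branchings T)"
      and lo: "left_of T b b'" and nc: "\<not> on_common_path (fst b) (fst b')"
    have vb: "fst b \<in> vertices T" "fst b' \<in> vertices T" using b b' br_fst_vert by auto
    have "lexless (fst b) (fst b') \<or> lexless (fst b') (fst b)"
      using lex_tri[of "fst b" "fst b'"] nc unfolding on_common_path_def by blast
    moreover have "\<not> lexless (fst b') (fst b)"
    proof
      assume "lexless (fst b') (fst b)"
      then have "before (branchings T) b' b" using br_lex(1) b b' by blast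
      moreover have "before (branchings T) b b'" using lo left_of_before by metis
      ultimately show False using before_distinct br_distinct(1) by metis
    qed
    ultimately have "lexless (fst b) (fst b')" by blast
    then have "inc T (fst b) < inc T (fst b')" using inc_lex vb by blast
    then show "lam (fst b) < lam (fst b')" using L vb unfolding left_increasing_def by simp
  qed
next
  assume C: "\<forall>b b'. b \<in> set (branchings T) \<and> b' \<in> set (branchings T) \<and> left_of T b b'
       \<and> \<not> on_common_path (fst b) (fst b') \<longrightarrow> lam (fst b) < lam (fst b')"
  have lmono: "lam w < lam v" if w: "w \<in> vertices T" and v: "v \<in> vertices T" and p: "prec w v" for w v
  proof -
    from p consider (d) u where "u \<noteq> []" "w = v @ u" | (l) "lexless w v" unfolding prec_def by blast
    then show ?thesis
    proof cases
      case d then show ?thesis using lam_desc[OF assms(2)] w by blast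
    next
      case l
      have bw: "(w, 1) \<in> set (branchings T)" "(v, 1) \<in> set (branchings T)"
        using vert_br assms(1) w v by auto
      have "left_of T (w, 1) (v, 1)" using br_lex(1) bw l left_of_before by fastforce
      then show ?thesis using C bw lex_not_common[OF l] by fastforce
    qed
  qed
  obtain k where k: "lam ` vertices T = {1..k}" using assms(2) unfolding increasing_def by blast
  show "left_increasing T lam"
    unfolding left_increasing_def
  proof
    fix v assume v: "v \<in> vertices T"
    have "lam v = card {w \<in> vertices T. w = v \<or> prec w v}" using rank[OF lmono k v] by blast
    also have "\<dots> = inc T v" using rank[OF inc_mono inc_img v] by simp
    finally show "lam v = inc T v" .
  qed
qed

end
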